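(* Let $m,n\ge 1$ and let $T$ be an invertible $mn\times mn$ Toeplitz-block Toeplitz matrix $T=\{\mathcal{T}_{i-k}\}_{i,k=1}^n$, $\mathcal{T}_r=\{t_r^{(j-\ell)}\}_{j,\ell=1}^m$. Define $$\omega(\lambda,\mu)=\mathbf{1}^*(A_1^*-\mu_1 I)^{-1}(A_2^*-\mu_2 I)^{-1}T^{-1}(A_2-\lambda_2 I)^{-1}(A_1-\lambda_1 I)^{-1}\mathbf{1},$$ $$u(\mu)=\mathbf{1}^*(A_1^*-\mu_1 I)^{-1}(A_2^*-\mu_2 I)^{-1}\Gamma-\mathrm{i}\begin{bmatrix}\mathbf{1}_m^*(\mathcal{A}_2^*-\mu_2 I_m)^{-1} & 0 & \mathbf{1}_n^*(\mathcal{A}_1^*-\mu_1 I_n)^{-1} & 0\end{bmatrix},$$ $$\widehat u(\lambda)=\widehat\Gamma(A_2-\lambda_2 I)^{-1}(A_1-\lambda_1 I)^{-1}\mathbf{1}+\mathrm{i}\begin{bmatrix}0\\ (\mathcal{A}_2-\lambda_2 I_m)^{-1}\mathbf{1}_m\\ 0\\ (\mathcal{A}_1-\lambda_1 I_n)^{-1}\mathbf{1}_n\end{bmatrix},$$ where in $u$ the blocks have lengths $m,m,n,n$ and in $\widehat u$ the blocks have heights $m,m,n,n$. Then for $p=1$ and $p=2$, $$\omega(\lambda,\mu)=\mathrm{i}(\lambda_p-\mu_p)^{-1}u(\mu)P_p\widehat u(\lambda).$$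
   Context: $\mathrm{i}$ is the imaginary unit, $I_r$ the $r\times r$ identity, $I=I_{mn}$, $\mathbf{1}_r$ the column of length $r$ with all entries $1$, $\mathbf{1}=\mathbf{1}_{mn}$; $^*$ is conjugate transpose. The entry $t_r^{(s)}$ of the block $\mathcal T_{i-k}$ at position $(j,\ell)$ sits in row $m(i-1)+j$, column $m(k-1)+\ell$ of $T$. For $N\ge1$ let $\mathcal{A}^{(N)}=\{a_{j-\ell}\}_{j,\ell=1}^N$ with $a_r=0$ for $r<0$, $a_0=\mathrm{i}/2$, $a_r=\mathrm{i}$ for $r>0$. Put $\mathcal A_1=\mathcal A^{(n)}$, $\mathcal A_2=\mathcal A^{(m)}$, $A_1=\{a_{i-k}I_m\}_{i,k=1}^n$ (i.e. $\mathcal A_1\otimes I_m$) and $A_2=\mathrm{diag}\{\mathcal A_2,\dots,\mathcal A_2\}$ ($n$ diagonal blocks). Define: $M_{11}=\mathrm{col}[\mathcal M_{11}^{(1)},\dots,\mathcal M_{11}^{(n)}]$ with $\mathcal M_{11}^{(i)}=\frac12\mathcal T_0+\sum_{s=1}^{i-1}\mathcal T_s$; $M_{21}=[I_m\ I_m\ \cdots\ I_m]$ ($m\times mn$); $M_{31}=M_{21}^*$; $M_{41}=[\mathcal M_{41}^{(1)}\ \cdots\ \mathcal M_{41}^{(n)}]$ with $\mathcal M_{41}^{(k)}=\frac12\mathcal T_0+\sum_{s=1}^{k-1}\mathcal T_{-s}$. For each $r$ let $\mathcal M_{12}^{(r)}$ be the $m\times1$ column whose $j$-th entry is $\frac12 t_r^{(0)}+\sum_{s=1}^{j-1}t_r^{(s)}$,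 and $\mathcal M_{42}^{(r)}$ the $1\times m$ row whose $\ell$-th entry is $\frac12 t_r^{(0)}+\sum_{s=1}^{\ell-1}t_r^{(-s)}$. Let $M_{12}=\{\mathcal M_{12}^{(i-k)}\}_{i,k=1}^n$ ($mn\times n$), $M_{22}=\mathrm{diag}\{\mathbf 1_m^*,\dots,\mathbf 1_m^*\}$ ($n\times mn$), $M_{32}=M_{22}^*$, $M_{42}=\{\mathcal M_{42}^{(i-k)}\}_{i,k=1}^n$ ($n\times mn$). Let $\Pi_p=[M_{1p}\ M_{3p}]$, $\widehat\Pi_p=\begin{bmatrix}M_{2p}\\ M_{4p}\end{bmatrix}$, $\Gamma_p=T^{-1}\Pi_p$, $\widehat\Gamma_p=\widehat\Pi_pT^{-1}$ ($p=1,2$), $\Gamma=[\Gamma_1\ \Gamma_2]$, $\widehat\Gamma=\begin{bmatrix}\widehat\Gamma_1\\ \widehat\Gamma_2\end{bmatrix}$. Finally $P_1=\mathrm{diag}\{I_{2m},0_{2n}\}$ and $P_2=I_{2(m+n)}-P_1$. *)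

theory Defs
  imports Complex_Main "Jordan_Normal_Form.Matrix"
begin

text \<open>All matrices are Jordan_Normal_Form matrices over complex numbers, indexed from 0.
  Row/column vectors are represented as 1 x N / N x 1 matrices.\<close>

definition cadj :: "complex mat \<Rightarrow> complex mat" where
  "cadj A = map_mat cnj (transpose_mat A)"

definition minv :: "complex mat \<Rightarrow> complex mat" where
  "minv A = (SOME B. B \<in> carrier_mat (dim_row A) (dim_row A) \<and>
       A * B = 1\<^sub>m (dim_row A) \<and> B * A = 1\<^sub>m (dim_row A))"

definition append_cols :: "complex mat \<Rightarrow> complex mat \<Rightarrow> complex mat" (infixr \<open>@\<^sub>c\<close> 65) where
  "A @\<^sub>c B = four_block_mat A B (0\<^sub>m 0 (dim_col A)) (0\<^sub>m 0 (dim_col B))"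

definition ones :: "nat \<Rightarrow> complex mat" where
  "ones r = mat r 1 (\<lambda>_. 1)"

text \<open>Toeplitz-block Toeplitz matrix; t r s stands for t_r^(s).
  Row index a = m*i + j (0-based), block i, inner j.\<close>
definition TBT :: "nat \<Rightarrow> nat \<Rightarrow> (int \<Rightarrow> int \<Rightarrow> complex) \<Rightarrow> complex mat" where
  "TBT m n t = mat (m*n) (m*n) (\<lambda>(a,b).
      t (int (a div m) - int (b div m)) (int (a mod m) - int (b mod m)))"

definition aval :: "int \<Rightarrow> complex" where
  "aval r = (if r < 0 then 0 else if r = 0 then \<i>/2 else \<i>)"

definition calA :: "nat \<Rightarrow> complex mat" where
  "calA N = mat N N (\<lambda>(j,l). aval (int j - int l))"

text \<open>A_1 = calA_n (x) I_m\<close>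
definition A1 :: "nat \<Rightarrow> nat \<Rightarrow> complex mat" where
  "A1 m n = mat (m*n) (m*n) (\<lambda>(a,b).
      if a mod m = b mod m then aval (int (a div m) - int (b div m)) else 0)"

text \<open>A_2 = diag(calA_m,...,calA_m)\<close>
definition A2 :: "nat \<Rightarrow> nat \<Rightarrow> complex mat" where
  "A2 m n = mat (m*n) (m*n) (\<lambda>(a,b).
      if a div m = b div m then aval (int (a mod m) - int (b mod m)) else 0)"

definition M11 :: "nat \<Rightarrow> nat \<Rightarrow> (int \<Rightarrow> int \<Rightarrow> complex) \<Rightarrow> complex mat" where
  "M11 m n t = mat (m*n) m (\<lambda>(a,l).
      t 0 (int (a mod m) - int l) / 2 +
      (\<Sum>s\<in>{1..a div m}. t (int s) (int (a mod m) - int l)))"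

definition M21 :: "nat \<Rightarrow> nat \<Rightarrow> complex mat" where
  "M21 m n = mat m (m*n) (\<lambda>(j,b). if j = b mod m then 1 else 0)"

definition M31 :: "nat \<Rightarrow> nat \<Rightarrow> complex mat" where
  "M31 m n = cadj (M21 m n)"

definition M41 :: "nat \<Rightarrow> nat \<Rightarrow> (int \<Rightarrow> int \<Rightarrow> complex) \<Rightarrow> complex mat" where
  "M41 m n t = mat m (m*n) (\<lambda>(j,b).
      t 0 (int j - int (b mod m)) / 2 +
      (\<Sum>s\<in>{1..b div m}. t (- int s) (int j - int (b mod m))))"

definition M12 :: "nat \<Rightarrow> nat \<Rightarrow> (int \<Rightarrow> int \<Rightarrow> complex) \<Rightarrow> complex mat" where
  "M12 m n t = mat (m*n) n (\<lambda>(a,k).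
      t (int (a div m) - int k) 0 / 2 +
      (\<Sum>s\<in>{1..a mod m}. t (int (a div m) - int k) (int s)))"

definition M22 :: "nat \<Rightarrow> nat \<Rightarrow> complex mat" where
  "M22 m n = mat n (m*n) (\<lambda>(i,b). if b div m = i then 1 else 0)"

definition M32 :: "nat \<Rightarrow> nat \<Rightarrow> complex mat" where
  "M32 m n = cadj (M22 m n)"

definition M42 :: "nat \<Rightarrow> nat \<Rightarrow> (int \<Rightarrow> int \<Rightarrow> complex) \<Rightarrow> complex mat" where
  "M42 m n t = mat n (m*n) (\<lambda>(i,b).
      t (int i - int (b div m)) 0 / 2 +
      (\<Sum>s\<in>{1..b mod m}. t (int i - int (b div m)) (- int s)))"

definition Gam :: "nat \<Rightarrow> nat \<Rightarrow> (int \<Rightarrow> int \<Rightarrow> complex) \<Rightarrow> complex mat" where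
  "Gam m n t = (let Ti = minv (TBT m n t) in
      (Ti * (M11 m n t @\<^sub>c M31 m n)) @\<^sub>c (Ti * (M12 m n t @\<^sub>c M32 m n)))"

definition Gamhat :: "nat \<Rightarrow> nat \<Rightarrow> (int \<Rightarrow> int \<Rightarrow> complex) \<Rightarrow> complex mat" where
  "Gamhat m n t = (let Ti = minv (TBT m n t) in
      ((M21 m n @\<^sub>r M41 m n t) * Ti) @\<^sub>r ((M22 m n @\<^sub>r M42 m n t) * Ti))"

definition Pmat :: "nat \<Rightarrow> nat \<Rightarrow> nat \<Rightarrow> complex mat" where
  "Pmat m n p = (let P1 = four_block_mat (1\<^sub>m (2*m)) (0\<^sub>m (2*m) (2*n))
                                        (0\<^sub>m (2*n) (2*m)) (0\<^sub>m (2*n) (2*n))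
     in if p = 1 then P1 else 1\<^sub>m (2*(m+n)) - P1)"

definition omega :: "nat \<Rightarrow> nat \<Rightarrow> (int \<Rightarrow> int \<Rightarrow> complex) \<Rightarrow> (nat \<Rightarrow> complex) \<Rightarrow> (nat \<Rightarrow> complex) \<Rightarrow> complex" where
  "omega m n t lam mu = (let N = m*n in
     (cadj (ones N) * minv (cadj (A1 m n) - mu 1 \<cdot>\<^sub>m 1\<^sub>m N)
        * minv (cadj (A2 m n) - mu 2 \<cdot>\<^sub>m 1\<^sub>m N) * minv (TBT m n t)
        * minv (A2 m n - lam 2 \<cdot>\<^sub>m 1\<^sub>m N) * minv (A1 m n - lam 1 \<cdot>\<^sub>m 1\<^sub>m N) * ones N) $$ (0,0))"

definition uvec :: "nat \<Rightarrow> nat \<Rightarrow> (int \<Rightarrow> int \<Rightarrow> complex) \<Rightarrow> (nat \<Rightarrow> complex) \<Rightarrow> complex mat" where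
  "uvec m n t mu = (let N = m*n in
     cadj (ones N) * minv (cadj (A1 m n) - mu 1 \<cdot>\<^sub>m 1\<^sub>m N)
        * minv (cadj (A2 m n) - mu 2 \<cdot>\<^sub>m 1\<^sub>m N) * Gam m n t
     - \<i> \<cdot>\<^sub>m ((cadj (ones m) * minv (cadj (calA m) - mu 2 \<cdot>\<^sub>m 1\<^sub>m m))
              @\<^sub>c 0\<^sub>m 1 m
              @\<^sub>c (cadj (ones n) * minv (cadj (calA n) - mu 1 \<cdot>\<^sub>m 1\<^sub>m n))
              @\<^sub>c 0\<^sub>m 1 n))"

definition uhat :: "nat \<Rightarrow> nat \<Rightarrow> (int \<Rightarrow> int \<Rightarrow> complex) \<Rightarrow> (nat \<Rightarrow> complex) \<Rightarrow> complex mat" where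
  "uhat m n t lam = (let N = m*n in
     Gamhat m n t * minv (A2 m n - lam 2 \<cdot>\<^sub>m 1\<^sub>m N) * minv (A1 m n - lam 1 \<cdot>\<^sub>m 1\<^sub>m N) * ones N
     + \<i> \<cdot>\<^sub>m (0\<^sub>m m 1
              @\<^sub>r (minv (calA m - lam 2 \<cdot>\<^sub>m 1\<^sub>m m) * ones m)
              @\<^sub>r 0\<^sub>m n 1
              @\<^sub>r (minv (calA n - lam 1 \<cdot>\<^sub>m 1\<^sub>m n) * ones n)))"

end

theory Submission
  imports Defs "Jordan_Normal_Form.Determinant"
begin

lemma mA: "dim_col A = dim_row B \<Longrightarrow> dim_col B = dim_row C \<Longrightarrow> A*B*C = A*(B*(C::'a::semiring_0 mat))"
  by (rule assoc_mult_mat[of A "dim_row A" "dim_col A" B "dim_col B" C "dim_col C"], auto)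
lemma mDLp: "dim_col A = dim_row B \<Longrightarrow> dim_row B = dim_row C \<Longrightarrow> dim_col B = dim_col C \<Longrightarrow> A*(B+C) = A*B + A*(C::'a::semiring_0 mat)"
  by (rule mult_add_distrib_mat[of A "dim_row A" "dim_col A" B "dim_col B"], auto)
lemma mDLm: "dim_col A = dim_row B \<Longrightarrow> dim_row B = dim_row C \<Longrightarrow> dim_col B = dim_col C \<Longrightarrow> A*(B-C) = A*B - A*(C::'a::ring mat)"
  by (rule mult_minus_distrib_mat[of A "dim_row A" "dim_col A" B "dim_col B"], auto)
lemma mDRp: "dim_col B = dim_row A \<Longrightarrow> dim_row B = dim_row C \<Longrightarrow> dim_col B = dim_col C \<Longrightarrow> (B+C)*A = B*A + C*(A::'a::semiring_0 mat)"
  by (rule add_mult_distrib_mat[of B "dim_row B" "dim_col B"], auto)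
lemma mDRm: "dim_col B = dim_row A \<Longrightarrow> dim_row B = dim_row C \<Longrightarrow> dim_col B = dim_col C \<Longrightarrow> (B-C)*A = B*A - C*(A::'a::ring mat)"
  by (rule minus_mult_distrib_mat[of B "dim_row B" "dim_col B"], auto)
lemma mSL: "dim_col A = dim_row B \<Longrightarrow> A*(k \<cdot>\<^sub>m B) = k \<cdot>\<^sub>m (A*(B::'a::comm_semiring_0 mat))"
  by (rule mult_smult_distrib[of A "dim_row A" "dim_col A" B "dim_col B"], auto)
lemma mSR: "dim_col A = dim_row B \<Longrightarrow> (k \<cdot>\<^sub>m A)*B = k \<cdot>\<^sub>m (A*(B::'a::comm_semiring_0 mat))"
  by (rule mult_smult_assoc_mat[of A "dim_row A" "dim_col A" B "dim_col B"], auto)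
lemmas msimps = mA mDLp mDLm mDRp mDRm mSL mSR

lemma inv_assoc: "A*B = 1\<^sub>m k \<Longrightarrow> dim_row C = k \<Longrightarrow> dim_col A = dim_row B \<Longrightarrow> A*(B*C) = (C::'a::semiring_1 mat)"
  by (metis left_mult_one_mat' mA index_mult_mat(2,3) index_one_mat(3))

lemma core:
  fixes T X A B R L P Q :: "complex mat"
  assumes car: "T \<in> carrier_mat N N" "X \<in> carrier_mat N N" "A \<in> carrier_mat N N" "B \<in> carrier_mat N N"
    "R \<in> carrier_mat N N" "L \<in> carrier_mat N N" "P \<in> carrier_mat N k" "Q \<in> carrier_mat k N"
  and XT: "X*T = 1\<^sub>m N" and TX: "T*X = 1\<^sub>m N"
  and R: "R*(B - mu \<cdot>\<^sub>m 1\<^sub>m N) = 1\<^sub>m N" and L: "(A - lm \<cdot>\<^sub>m 1\<^sub>m N)*L = 1\<^sub>m N"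
  and D: "A*T - T*B = \<i> \<cdot>\<^sub>m (P*Q)"
  shows "R*X - X*L = \<i> \<cdot>\<^sub>m (R*(X*(P*(Q*(X*L))))) + (mu-lm) \<cdot>\<^sub>m (R*(X*L))"
proof -
  have d: "dim_row T = N" "dim_col T = N" "dim_row X = N" "dim_col X = N" "dim_row A = N" "dim_col A = N"
    "dim_row B = N" "dim_col B = N" "dim_row R = N" "dim_col R = N" "dim_row L = N" "dim_col L = N"
    "dim_row P = N" "dim_col P = k" "dim_row Q = k" "dim_col Q = N" using car by auto
  note XT' = inv_assoc[OF XT] and TX' = inv_assoc[OF TX]
  have "X*((A*T - T*B)*X) = X*A - B*X"
    using d by (simp add: msimps XT' TX' TX)
  hence 1: "X*A - B*X = \<i> \<cdot>\<^sub>m (X*(P*(Q*X)))" using d by (simp add: D msimps)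
  have 2: "X*(A - lm \<cdot>\<^sub>m 1\<^sub>m N) - (B - mu \<cdot>\<^sub>m 1\<^sub>m N)*X = (X*A - B*X) + (mu - lm) \<cdot>\<^sub>m X"
    using d by (auto simp: msimps algebra_simps intro!: eq_matI)
  have "R*X - X*L = R*(X*((A - lm \<cdot>\<^sub>m 1\<^sub>m N)*L)) - (R*(B - mu \<cdot>\<^sub>m 1\<^sub>m N))*(X*L)"
    using d R L by simp
  also have "\<dots> = R*((X*(A - lm \<cdot>\<^sub>m 1\<^sub>m N) - (B - mu \<cdot>\<^sub>m 1\<^sub>m N)*X)*L)"
    using d by (simp add: msimps)
  also have "\<dots> = \<i> \<cdot>\<^sub>m (R*(X*(P*(Q*(X*L))))) + (mu-lm) \<cdot>\<^sub>m (R*(X*L))"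
    unfolding 2 1 using d by (simp add: msimps)
  finally show ?thesis .
qed

lemma S1:
  assumes "j < (m::nat)"
  shows "(\<Sum>c<m*n. if c mod m = j then f (c div m) (c mod m) else 0) = (\<Sum>k<n. (f k j :: complex))"
proof -
  have m: "m > 0" using assms by auto
  have inj: "inj_on (\<lambda>k. k*m+j) {..<n}" by (rule inj_onI) (use m assms in auto)
  have set: "{c\<in>{..<m*n}. c mod m = j} = (\<lambda>k. k*m+j) ` {..<n}"
  proof (intro equalityI subsetI)
    fix c assume "c \<in> {c\<in>{..<m*n}. c mod m = j}"
    hence c: "c < m*n" "c mod m = j" by auto
    have "c div m < n" using c(1) by (simp add: less_mult_imp_div_less mult.commute)
    moreover have "c = (c div m)*m + j" using c(2) by (metis div_mult_mod_eq)
    ultimately show "c \<in> (\<lambda>k. k*m+j) ` {..<n}" by blast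
  next
    fix c assume "c \<in> (\<lambda>k. k*m+j) ` {..<n}"
    then obtain k where k: "k < n" "c = k*m+j" by auto
    have "k*m + j < k*m + m" using assms by simp
    also have "\<dots> = (k+1)*m" by simp
    also have "\<dots> \<le> n*m" using k(1) by (intro mult_right_mono) auto
    finally show "c \<in> {c\<in>{..<m*n}. c mod m = j}" using k assms by (simp add: mult.commute)
  qed
  have "(\<Sum>c<m*n. if c mod m = j then f (c div m) (c mod m) else 0)
      = (\<Sum>c\<in>{c\<in>{..<m*n}. c mod m = j}. f (c div m) (c mod m))"
    by (subst sum.inter_filter) simp_all
  also have "\<dots> = (\<Sum>k<n. f ((k*m+j) div m) ((k*m+j) mod m))"
    unfolding set by (simp add: sum.reindex[OF inj])
  also have "\<dots> = (\<Sum>k<n. f k j)" using assms m by simp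
  finally show ?thesis .
qed

lemma S2:
  assumes "i < (n::nat)" and m: "m > 0"
  shows "(\<Sum>c<m*n. if c div m = i then f (c div m) (c mod m) else 0) = (\<Sum>l<m. (f i l :: complex))"
proof -
  have inj: "inj_on (\<lambda>l. i*m+l) {..<m}" by (rule inj_onI) auto
  have set: "{c\<in>{..<m*n}. c div m = i} = (\<lambda>l. i*m+l) ` {..<m}"
  proof (intro equalityI subsetI)
    fix c assume "c \<in> {c\<in>{..<m*n}. c div m = i}"
    hence c: "c < m*n" "c div m = i" by auto
    have "c = i*m + c mod m" using c(2) by (metis div_mult_mod_eq)
    moreover have "c mod m < m" using m by simp
    ultimately show "c \<in> (\<lambda>l. i*m+l) ` {..<m}" by blast
  next
    fix c assume "c \<in> (\<lambda>l. i*m+l) ` {..<m}"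
    then obtain l where l: "l < m" "c = i*m+l" by auto
    have "i*m + l < i*m + m" using l by simp
    also have "\<dots> = (i+1)*m" by simp
    also have "\<dots> \<le> n*m" using assms(1) by (intro mult_right_mono) auto
    finally show "c \<in> {c\<in>{..<m*n}. c div m = i}" using l m by (simp add: mult.commute)
  qed
  have "(\<Sum>c<m*n. if c div m = i then f (c div m) (c mod m) else 0)
      = (\<Sum>c\<in>{c\<in>{..<m*n}. c div m = i}. f (c div m) (c mod m))"
    by (subst sum.inter_filter) simp_all
  also have "\<dots> = (\<Sum>l<m. f ((i*m+l) div m) ((i*m+l) mod m))"
    unfolding set by (simp add: sum.reindex[OF inj])
  also have "\<dots> = (\<Sum>l<m. f i l)" using m by simp
  finally show ?thesis .
qed

lemma star0: "(\<Sum>k<i'. g (- int k)) + g (- int i') = g 0 + (\<Sum>s\<in>{1..i'}. g (- int s))"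
  by (induction i') (auto simp: sum.cl_ivl_Suc algebra_simps)

lemma star: "(\<Sum>k<i. g (int k - int i')) + (\<Sum>k<i'. g (int i - int k)) + g (int i - int i')
   = g 0 + (\<Sum>s\<in>{1..i}. g (int s)) + (\<Sum>s\<in>{1..i'}. (g (- int s) :: complex))"
proof (induction i)
  case 0 then show ?case using star0[where g=g and i'=i'] by simp
next
  case (Suc i)
  have tel: "(\<Sum>k<i'. g (int (Suc i) - int k)) - (\<Sum>k<i'. g (int i - int k)) = g (int (Suc i)) - g (int (Suc i) - int i')"
  proof -
    have "(\<Sum>k<i'. g (int (Suc i) - int k)) - (\<Sum>k<i'. g (int i - int k))
        = (\<Sum>k<i'. g (int (Suc i) - int k) - g (int (Suc i) - int (Suc k)))"
      by (simp add: sum_subtractf)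
    also have "\<dots> = g (int (Suc i) - int 0) - g (int (Suc i) - int i')"
      by (rule sum_lessThan_telescope')
    finally show ?thesis by simp
  qed
  have "(\<Sum>k<Suc i. g (int k - int i')) + (\<Sum>k<i'. g (int (Suc i) - int k)) + g (int (Suc i) - int i')
     = ((\<Sum>k<i. g (int k - int i')) + (\<Sum>k<i'. g (int i - int k)) + g (int i - int i')) + g (int (Suc i))"
    using tel by (simp add: algebra_simps)
  also have "\<dots> = g 0 + (\<Sum>s\<in>{1..Suc i}. g (int s)) + (\<Sum>s\<in>{1..i'}. g (- int s))"
    using Suc by (simp add: sum.cl_ivl_Suc)
  finally show ?case .
qed

lemma aval_cnj: "cnj (aval r) = - aval r"
  by (simp add: aval_def complex_eq_iff)

lemma sumA:
  assumes "i < n'"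
  shows "(\<Sum>k<n'. aval (int i - int k) * g k) = \<i> * (\<Sum>k<i. g k) + \<i>/2 * g i"
proof -
  have "(\<Sum>k<n'. aval (int i - int k) * g k) = (\<Sum>k<Suc i. aval (int i - int k) * g k) + (\<Sum>k\<in>{Suc i..<n'}. aval (int i - int k) * g k)"
    using assms by (metis Suc_leI atLeast0LessThan sum.atLeastLessThan_concat zero_le)
  also have "(\<Sum>k\<in>{Suc i..<n'}. aval (int i - int k) * g k) = 0"
    by (rule sum.neutral) (auto simp: aval_def)
  also have "(\<Sum>k<Suc i. aval (int i - int k) * g k) = (\<Sum>k<i. \<i> * g k) + \<i>/2 * g i"
    by (simp add: aval_def)
  finally show ?thesis by (simp add: sum_distrib_left)
qed

lemma KEY:
  assumes "i < n'" "i' < n'"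
  shows "(\<Sum>k<n'. aval (int i - int k) * g (int k - int i')) - (\<Sum>k<n'. g (int i - int k) * cnj (aval (int i' - int k)))
    = \<i> * ((g 0 / 2 + (\<Sum>s\<in>{1..i}. g (int s))) + (g 0 / 2 + (\<Sum>s\<in>{1..i'}. g (- int s))))"
proof -
  have 1: "(\<Sum>k<n'. aval (int i - int k) * g (int k - int i')) = \<i> * (\<Sum>k<i. g (int k - int i')) + \<i>/2 * g (int i - int i')"
    using sumA[OF assms(1)] by simp
  have "(\<Sum>k<n'. g (int i - int k) * cnj (aval (int i' - int k))) = - (\<Sum>k<n'. aval (int i' - int k) * g (int i - int k))"
    by (simp add: aval_cnj sum_negf[symmetric] mult.commute)
  also have "\<dots> = - (\<i> * (\<Sum>k<i'. g (int i - int k)) + \<i>/2 * g (int i - int i'))"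
    using sumA[OF assms(2)] by simp
  finally have 2: "(\<Sum>k<n'. g (int i - int k) * cnj (aval (int i' - int k))) = - (\<i> * (\<Sum>k<i'. g (int i - int k)) + \<i>/2 * g (int i - int i'))" .
  have "\<i> * ((\<Sum>k<i. g (int k - int i')) + (\<Sum>k<i'. g (int i - int k)) + g (int i - int i'))
   = \<i> * (g 0 + (\<Sum>s\<in>{1..i}. g (int s)) + (\<Sum>s\<in>{1..i'}. (g (- int s))))"
    using star[where g=g and i=i and i'=i'] by simp
  then show ?thesis unfolding 1 2 by (simp add: algebra_simps)
qed

lemma fb0: "dim_row D = 0 \<Longrightarrow> dim_col D = 0 \<Longrightarrow> four_block_mat A B C D = A"
  by (rule eq_matI) auto

lemma idx_ac:
  "i < dim_row A \<Longrightarrow> j < dim_col A + dim_col B \<Longrightarrow> (A @\<^sub>c B) $$ (i,j) = (if j < dim_col A then A $$ (i,j) else B $$ (i, j - dim_col A))"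
  "dim_row (A @\<^sub>c B) = dim_row A" "dim_col (A @\<^sub>c B) = dim_col A + dim_col B"
  unfolding append_cols_def by auto

lemma idx_ar:
  "i < dim_row A + dim_row B \<Longrightarrow> j < dim_col A \<Longrightarrow> (A @\<^sub>r B) $$ (i,j) = (if i < dim_row A then A $$ (i,j) else B $$ (i - dim_row A, j))"
  "dim_row (A @\<^sub>r B) = dim_row A + dim_row B" "dim_col (A @\<^sub>r B) = dim_col A"
  unfolding append_rows_def by auto

lemma ac_ar:
  fixes A B C D :: "complex mat"
  assumes "dim_col A = dim_row C" "dim_col B = dim_row D" "dim_row A = dim_row B" "dim_col C = dim_col D"
  shows "(A @\<^sub>c B) * (C @\<^sub>r D) = A*C + B*D"
  unfolding append_cols_def append_rows_def
  apply (subst mult_four_block_mat[of A "dim_row A" "dim_col A" B "dim_col B" _ 0 _ C "dim_col C" _ 0])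
  using assms by (auto intro!: fb0)

lemma ac_ar2:
  fixes A B C D M :: "complex mat"
  assumes "dim_col A = dim_row C" "dim_col B = dim_row D" "dim_row A = dim_row B" "dim_col C = dim_col D" "dim_col C = dim_row M"
  shows "(A @\<^sub>c B) * ((C @\<^sub>r D) * M) = A*(C*M) + B*(D*M)"
  using assms by (simp add: mA[symmetric] ac_ar idx_ac idx_ar mDRp)

lemma mL_ac:
  fixes M A B :: "complex mat"
  assumes "dim_col M = dim_row A" "dim_row A = dim_row B"
  shows "M * (A @\<^sub>c B) = (M*A) @\<^sub>c (M*B)"
proof -
  have M: "M = four_block_mat M (0\<^sub>m (dim_row M) 0) (0\<^sub>m 0 (dim_col M)) (0\<^sub>m 0 0)" by (simp add: fb0)
  show ?thesis
    unfolding append_cols_def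
    apply (subst M)
    apply (subst mult_four_block_mat[of M "dim_row M" "dim_col M" _ 0 _ 0 _ A "dim_col A" B "dim_col B"])
    using assms by (auto intro!: cong_four_block_mat eq_matI simp: scalar_prod_def)
qed

lemma mR_ar:
  fixes M A B :: "complex mat"
  assumes "dim_col A = dim_row M" "dim_col A = dim_col B"
  shows "(A @\<^sub>r B) * M = (A*M) @\<^sub>r (B*M)"
proof -
  have M: "M = four_block_mat M (0\<^sub>m (dim_row M) 0) (0\<^sub>m 0 (dim_col M)) (0\<^sub>m 0 0)" by (simp add: fb0)
  show ?thesis
    unfolding append_rows_def
    apply (subst (1) M)
    apply (subst mult_four_block_mat[of A "dim_row A" "dim_col A" _ 0 B "dim_row B" _ M "dim_col M" _ 0])
    using assms by (auto intro!: cong_four_block_mat eq_matI simp: scalar_prod_def)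
qed

lemma ac_smult: "dim_row A = dim_row B \<Longrightarrow> c \<cdot>\<^sub>m (A @\<^sub>c B) = (c \<cdot>\<^sub>m A) @\<^sub>c (c \<cdot>\<^sub>m B)"
  by (rule eq_matI) (auto simp: idx_ac)
lemma ar_smult: "dim_col A = dim_col B \<Longrightarrow> c \<cdot>\<^sub>m (A @\<^sub>r B) = (c \<cdot>\<^sub>m A) @\<^sub>r (c \<cdot>\<^sub>m B)"
  by (rule eq_matI) (auto simp: idx_ar)
lemma ac_minus: "dim_row A = dim_row B \<Longrightarrow> dim_row C = dim_row A \<Longrightarrow> dim_row D = dim_row A \<Longrightarrow> dim_col A = dim_col C \<Longrightarrow> dim_col B = dim_col D \<Longrightarrow>
   (A @\<^sub>c B) - (C @\<^sub>c D) = (A - C) @\<^sub>c (B - D)"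
  by (rule eq_matI) (auto simp: idx_ac)
lemma ar_plus: "dim_col A = dim_col B \<Longrightarrow> dim_col C = dim_col A \<Longrightarrow> dim_col D = dim_col A \<Longrightarrow> dim_row A = dim_row C \<Longrightarrow> dim_row B = dim_row D \<Longrightarrow>
   (A @\<^sub>r B) + (C @\<^sub>r D) = (A + C) @\<^sub>r (B + D)"
  by (rule eq_matI) (auto simp: idx_ar)
lemma ac_assoc: "dim_row A = dim_row B \<Longrightarrow> dim_row B = dim_row C \<Longrightarrow> (A @\<^sub>c B) @\<^sub>c C = A @\<^sub>c (B @\<^sub>c C)"
  by (rule eq_matI) (auto simp: idx_ac)
lemma ar_assoc: "dim_col A = dim_col B \<Longrightarrow> dim_col B = dim_col C \<Longrightarrow> (A @\<^sub>r B) @\<^sub>r C = A @\<^sub>r (B @\<^sub>r C)"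
  by (rule eq_matI) (auto simp: idx_ar)

lemma Pmat2: "Pmat m n 2 = four_block_mat (0\<^sub>m (2*m) (2*m)) (0\<^sub>m (2*m) (2*n)) (0\<^sub>m (2*n) (2*m)) (1\<^sub>m (2*n))"
  unfolding Pmat_def Let_def by (rule eq_matI) auto

lemma uPv1:
  fixes U1 U2 V1 V2 :: "complex mat"
  assumes "U1 \<in> carrier_mat r (2*m)" "U2 \<in> carrier_mat r (2*n)" "V1 \<in> carrier_mat (2*m) c" "V2 \<in> carrier_mat (2*n) c"
  shows "(U1 @\<^sub>c U2) * Pmat m n 1 * (V1 @\<^sub>r V2) = U1 * V1"
proof -
  have "(U1 @\<^sub>c U2) * Pmat m n 1 = U1 @\<^sub>c 0\<^sub>m r (2*n)"
    unfolding append_cols_def Pmat_def Let_def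
    apply (simp only: if_P[OF refl])
    apply (subst mult_four_block_mat[of U1 r "2*m" U2 "2*n" _ 0 _ _ "2*m" _ "2*n"])
    using assms by (auto intro!: cong_four_block_mat eq_matI simp: scalar_prod_def)
  then show ?thesis using assms by (simp add: ac_ar)
qed

lemma uPv2:
  fixes U1 U2 V1 V2 :: "complex mat"
  assumes "U1 \<in> carrier_mat r (2*m)" "U2 \<in> carrier_mat r (2*n)" "V1 \<in> carrier_mat (2*m) c" "V2 \<in> carrier_mat (2*n) c"
  shows "(U1 @\<^sub>c U2) * Pmat m n 2 * (V1 @\<^sub>r V2) = U2 * V2"
proof -
  have "(U1 @\<^sub>c U2) * Pmat m n 2 = 0\<^sub>m r (2*m) @\<^sub>c U2"
    unfolding append_cols_def Pmat2
    apply (subst mult_four_block_mat[of U1 r "2*m" U2 "2*n" _ 0 _ _ "2*m" _ "2*n"])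
    using assms by (auto intro!: cong_four_block_mat eq_matI simp: scalar_prod_def)
  then show ?thesis using assms by (simp add: ac_ar)
qed

lemma G:
  fixes x y R X L Pa Pb Qa Qb r l W Z :: "complex mat"
  assumes car: "x \<in> carrier_mat 1 N" "y \<in> carrier_mat N 1" "R \<in> carrier_mat N N" "X \<in> carrier_mat N N"
    "L \<in> carrier_mat N N" "Pa \<in> carrier_mat N k" "Pb \<in> carrier_mat N k" "Qa \<in> carrier_mat k N" "Qb \<in> carrier_mat k N"
    "r \<in> carrier_mat 1 k" "l \<in> carrier_mat k 1"
  and core: "R*X - X*L = \<i> \<cdot>\<^sub>m (R*(X*((Pa @\<^sub>c Pb)*((Qa @\<^sub>r Qb)*(X*L))))) + (mu-lm) \<cdot>\<^sub>m (R*(X*L))"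
  and Pl: "Pb*l = y" and rQ: "r*Qa = x" and W: "W = x*R" and Z: "Z = L*y"
  shows "(W*(X*(Pa @\<^sub>c Pb)) - \<i> \<cdot>\<^sub>m (r @\<^sub>c 0\<^sub>m 1 k)) * ((Qa @\<^sub>r Qb)*X*Z + \<i> \<cdot>\<^sub>m (0\<^sub>m k 1 @\<^sub>r l))
     = (\<i>*(mu-lm)) \<cdot>\<^sub>m (x*(R*(X*(L*y))))"
proof -
  have d: "dim_row x = 1" "dim_col x = N" "dim_row y = N" "dim_col y = 1" "dim_row R = N" "dim_col R = N"
    "dim_row X = N" "dim_col X = N" "dim_row L = N" "dim_col L = N" "dim_row Pa = N" "dim_col Pa = k"
    "dim_row Pb = N" "dim_col Pb = k" "dim_row Qa = k" "dim_col Qa = N" "dim_row Qb = k" "dim_col Qb = N"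
    "dim_row r = 1" "dim_col r = k" "dim_row l = k" "dim_col l = 1" using car by auto
  have e1: "(Pa @\<^sub>c Pb)*(0\<^sub>m k 1 @\<^sub>r l) = y"
    using d by (subst ac_ar) (auto simp: Pl[symmetric] intro!: eq_matI)
  have e2: "(r @\<^sub>c 0\<^sub>m 1 k)*((Qa @\<^sub>r Qb)*M) = x*M" if "dim_row M = N" for M
    using d that by (subst ac_ar2) (auto simp: rQ[symmetric] mA intro!: eq_matI)
  have e3: "(r @\<^sub>c 0\<^sub>m 1 k)*(0\<^sub>m k 1 @\<^sub>r l) = 0\<^sub>m 1 1"
    using d by (subst ac_ar) (auto intro!: eq_matI)
  have "x*((R*X - X*L)*y) = x*((\<i> \<cdot>\<^sub>m (R*(X*((Pa @\<^sub>c Pb)*((Qa @\<^sub>r Qb)*(X*L))))) + (mu-lm) \<cdot>\<^sub>m (R*(X*L)))*y)"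
    by (simp add: core)
  hence c1: "x*(R*(X*y)) - x*(X*(L*y)) = \<i> \<cdot>\<^sub>m (x*(R*(X*((Pa @\<^sub>c Pb)*((Qa @\<^sub>r Qb)*(X*(L*y)))))))
      + (mu-lm) \<cdot>\<^sub>m (x*(R*(X*(L*y))))"
    using d by (simp add: msimps idx_ac idx_ar)
  have c2: "(x*(R*(X*y))) $$ (0,0) - (x*(X*(L*y))) $$ (0,0) = \<i> * (x*(R*(X*((Pa @\<^sub>c Pb)*((Qa @\<^sub>r Qb)*(X*(L*y))))))) $$ (0,0)
      + (mu-lm) * (x*(R*(X*(L*y)))) $$ (0,0)"
    using arg_cong[OF c1, of "\<lambda>M. M $$ (0,0)"] d by (simp add: idx_ac idx_ar del: index_mult_mat(1))
  hence c3: "(x*(R*(X*((Pa @\<^sub>c Pb)*((Qa @\<^sub>r Qb)*(X*(L*y))))))) $$ (0,0) = - \<i> * ((x*(R*(X*y))) $$ (0,0) - (x*(X*(L*y))) $$ (0,0)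
      - (mu-lm) * (x*(R*(X*(L*y)))) $$ (0,0))"
    by (simp add: algebra_simps)
  show ?thesis
    unfolding W Z
    using d e1 e2 e3 c3 
    apply (simp add: msimps idx_ac idx_ar)
    apply (rule eq_matI)
     apply (simp_all add: idx_ac idx_ar del: index_mult_mat(1))
    apply (simp add: algebra_simps)
    done
qed

lemma commute_inv:
  fixes M K L1 L2 :: "complex mat"
  assumes car: "M \<in> carrier_mat N N" "K \<in> carrier_mat N N" "L1 \<in> carrier_mat N N" "L2 \<in> carrier_mat N N"
    and h: "M*L1 = 1\<^sub>m N" "L1*M = 1\<^sub>m N" "K*L2 = 1\<^sub>m N" "L2*K = 1\<^sub>m N" "M*K = K*M"
  shows "L1*L2 = L2*L1"
proof -
  have d: "dim_row M = N" "dim_col M = N" "dim_row K = N" "dim_col K = N" "dim_row L1 = N" "dim_col L1 = N"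
     "dim_row L2 = N" "dim_col L2 = N" using car by auto
  have 1: "M*(K*(L1*L2)) = 1\<^sub>m N"
  proof -
    have "M*(K*(L1*L2)) = (M*K)*(L1*L2)" using d by (simp add: mA)
    also have "\<dots> = K*(M*L1)*L2" using d by (simp add: h(5) mA)
    also have "\<dots> = 1\<^sub>m N" using d h by simp
    finally show ?thesis .
  qed
  have "L2*L1 = (L2*L1)*(M*(K*(L1*L2)))" using d 1 by simp
  also have "\<dots> = L2*(L1*M)*(K*(L1*L2))" using d by (simp add: mA)
  also have "\<dots> = (L2*K)*(L1*L2)" using d h by (simp add: mA[symmetric])
  also have "\<dots> = L1*L2" using d h by simp
  finally show ?thesis by simp
qed

lemma col_trick:
  fixes K S C Ci L :: "complex mat"
  assumes car: "K \<in> carrier_mat N N" "S \<in> carrier_mat N k" "C \<in> carrier_mat k k" "Ci \<in> carrier_mat k k" "L \<in> carrier_mat N N"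
    and h: "K*S = S*C" "S*ones k = ones N" "(C - lm \<cdot>\<^sub>m 1\<^sub>m k)*Ci = 1\<^sub>m k" "L*(K - lm \<cdot>\<^sub>m 1\<^sub>m N) = 1\<^sub>m N"
  shows "S*(Ci*ones k) = L*ones N"
proof -
  have d: "dim_row K = N" "dim_col K = N" "dim_row S = N" "dim_col S = k" "dim_row C = k" "dim_col C = k"
    "dim_row Ci = k" "dim_col Ci = k" "dim_row L = N" "dim_col L = N" "dim_row (ones k) = k" "dim_col (ones k) = 1"
    using car by (auto simp: ones_def)
  have 1: "(K - lm \<cdot>\<^sub>m 1\<^sub>m N)*S = S*(C - lm \<cdot>\<^sub>m 1\<^sub>m k)"
    using d by (simp add: msimps h(1))
  have "L*ones N = L*(S*((C - lm \<cdot>\<^sub>m 1\<^sub>m k)*(Ci*ones k)))"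
    using d h(2,3) by (simp add: mA[symmetric])
  also have "\<dots> = L*((K - lm \<cdot>\<^sub>m 1\<^sub>m N)*(S*(Ci*ones k)))"
    using d 1 by (simp add: mA[symmetric])
  also have "\<dots> = S*(Ci*ones k)"
    using d h(4) by (simp add: mA[symmetric])
  finally show ?thesis by simp
qed

lemma row_trick:
  fixes K S C Ci R :: "complex mat"
  assumes car: "K \<in> carrier_mat N N" "S \<in> carrier_mat k N" "C \<in> carrier_mat k k" "Ci \<in> carrier_mat k k" "R \<in> carrier_mat N N"
    and h: "S*K = C*S" "cadj (ones k)*S = cadj (ones N)" "Ci*(C - mu \<cdot>\<^sub>m 1\<^sub>m k) = 1\<^sub>m k" "(K - mu \<cdot>\<^sub>m 1\<^sub>m N)*R = 1\<^sub>m N"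
  shows "(cadj (ones k)*Ci)*S = cadj (ones N)*R"
proof -
  have d: "dim_row K = N" "dim_col K = N" "dim_row S = k" "dim_col S = N" "dim_row C = k" "dim_col C = k"
    "dim_row Ci = k" "dim_col Ci = k" "dim_row R = N" "dim_col R = N" "dim_row (cadj (ones k)) = 1" "dim_col (cadj (ones k)) = k"
    using car by (auto simp: ones_def cadj_def)
  have 1: "S*(K - mu \<cdot>\<^sub>m 1\<^sub>m N) = (C - mu \<cdot>\<^sub>m 1\<^sub>m k)*S"
    using d by (simp add: msimps h(1))
  have "cadj (ones N)*R = cadj (ones k)*(Ci*((C - mu \<cdot>\<^sub>m 1\<^sub>m k)*(S*R)))"
    using d h(2,3) by (simp add: mA[symmetric])
  also have "\<dots> = cadj (ones k)*(Ci*(S*((K - mu \<cdot>\<^sub>m 1\<^sub>m N)*R)))"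
    using d 1 by (simp add: mA[symmetric])
  also have "\<dots> = cadj (ones k)*(Ci*S)"
    using d h(4) by simp
  finally show ?thesis using d by (simp add: mA)
qed

lemma idx_mult: "i < dim_row A \<Longrightarrow> j < dim_col B \<Longrightarrow> dim_col A = dim_row B \<Longrightarrow>
   (A*B) $$ (i,j) = (\<Sum>k<dim_row B. A $$ (i,k) * B $$ (k,j))"
  by (simp add: scalar_prod_def atLeast0LessThan)

lemma idx_cadj: "i < dim_col A \<Longrightarrow> j < dim_row A \<Longrightarrow> cadj A $$ (i,j) = cnj (A $$ (j,i))"
  "dim_row (cadj A) = dim_col A" "dim_col (cadj A) = dim_row A"
  unfolding cadj_def by auto

lemma cadj_cadj: "cadj (cadj A) = A"
  by (rule eq_matI) (auto simp: idx_cadj)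

lemma cadj_mult: "dim_col A = dim_row B \<Longrightarrow> cadj (A*B) = cadj B * cadj A"
  by (rule eq_matI) (auto simp: idx_cadj scalar_prod_def mult.commute intro!: sum.cong)

lemma dims:
  "dim_row (TBT m n t) = m*n" "dim_col (TBT m n t) = m*n"
  "dim_row (A1 m n) = m*n" "dim_col (A1 m n) = m*n"
  "dim_row (A2 m n) = m*n" "dim_col (A2 m n) = m*n"
  "dim_row (calA k) = k" "dim_col (calA k) = k"
  "dim_row (M11 m n t) = m*n" "dim_col (M11 m n t) = m"
  "dim_row (M21 m n) = m" "dim_col (M21 m n) = m*n"
  "dim_row (M31 m n) = m*n" "dim_col (M31 m n) = m"
  "dim_row (M41 m n t) = m" "dim_col (M41 m n t) = m*n"
  "dim_row (M12 m n t) = m*n" "dim_col (M12 m n t) = n"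
  "dim_row (M22 m n) = n" "dim_col (M22 m n) = m*n"
  "dim_row (M32 m n) = m*n" "dim_col (M32 m n) = n"
  "dim_row (M42 m n t) = n" "dim_col (M42 m n t) = m*n"
  "dim_row (ones k) = k" "dim_col (ones k) = 1"
  by (auto simp: TBT_def A1_def A2_def calA_def M11_def M21_def M31_def M41_def M12_def M22_def M32_def M42_def ones_def idx_cadj)

lemma dmod1: "a < m*n \<Longrightarrow> a mod m < (m::nat)"
  by (metis mod_less_divisor gr_zeroI mult_eq_0_iff not_less_zero)
lemma dmod2: "a < m*n \<Longrightarrow> a div m < (n::nat)"
  by (simp add: less_mult_imp_div_less mult.commute)
lemmas dmod = dmod1 dmod2

lemma dl1: "(j::nat) < n \<Longrightarrow> (\<Sum>k<n. f k * (if k = j then 1 else 0)) = (f j :: complex)"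
proof -
  assume "j < n"
  have "(\<Sum>k<n. f k * (if k = j then 1 else 0)) = (\<Sum>k<n. if k = j then f k else 0)" by (rule sum.cong) auto
  then show ?thesis using \<open>j < n\<close> by simp
qed
lemma dl2: "(j::nat) < n \<Longrightarrow> (\<Sum>k<n. f k * (if j = k then 1 else 0)) = (f j :: complex)"
  using dl1[of j n f] by (simp add: eq_commute)

lemma dl3: "(j::nat) < n \<Longrightarrow> (\<Sum>k<n. cnj (if k = j then 1 else 0) * f k) = (f j :: complex)"
proof -
  assume "j < n"
  have "(\<Sum>k<n. cnj (if k = j then 1 else 0) * f k) = (\<Sum>k<n. if k = j then f k else 0)" by (rule sum.cong) auto
  then show ?thesis using \<open>j < n\<close> by simp
qed
lemma dl4: "(j::nat) < n \<Longrightarrow> (\<Sum>k<n. cnj (if j = k then 1 else 0) * f k) = (f j :: complex)"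
  using dl3[of j n f] by (simp add: eq_commute)

lemma F1:
  assumes a: "a < m*n" and b: "b < m*n"
  shows "(A1 m n * TBT m n t) $$ (a,b) - (TBT m n t * cadj (A1 m n)) $$ (a,b)
    = \<i> * ((M11 m n t * M21 m n) $$ (a,b) + (M31 m n * M41 m n t) $$ (a,b))"
proof -
  define i where "i = a div m"
  define j where "j = a mod m"
  define i' where "i' = b div m"
  define j' where "j' = b mod m"
  have ij: "i < n" "j < m" "i' < n" "j' < m" using dmod a b unfolding i_def j_def i'_def j'_def by auto
  define g where "g r = t r (int j - int j')" for r
  have 1: "(A1 m n * TBT m n t) $$ (a,b) = (\<Sum>k<n. aval (int i - int k) * g (int k - int i'))"
  proof -
    have "(A1 m n * TBT m n t) $$ (a,b) = (\<Sum>c<m*n. if c mod m = j then (\<lambda>k l. aval (int i - int k) * t (int k - int i') (int l - int j')) (c div m) (c mod m) else 0)"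
      using a b apply (subst idx_mult) apply (simp_all add: dims) by (auto simp: dims A1_def TBT_def i_def j_def i'_def j'_def intro!: sum.cong)
    also have "\<dots> = (\<Sum>k<n. aval (int i - int k) * g (int k - int i'))"
      by (subst S1[OF ij(2)]) (simp add: g_def)
    finally show ?thesis .
  qed
  have 2: "(TBT m n t * cadj (A1 m n)) $$ (a,b) = (\<Sum>k<n. g (int i - int k) * cnj (aval (int i' - int k)))"
  proof -
    have "(TBT m n t * cadj (A1 m n)) $$ (a,b) = (\<Sum>c<m*n. if c mod m = j' then (\<lambda>k l. t (int i - int k) (int j - int l) * cnj (aval (int i' - int k))) (c div m) (c mod m) else 0)"
      using a b apply (subst idx_mult) apply (simp_all add: dims idx_cadj) by (auto simp: dims idx_cadj A1_def TBT_def i_def j_def i'_def j'_def intro!: sum.cong)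
    also have "\<dots> = (\<Sum>k<n. g (int i - int k) * cnj (aval (int i' - int k)))"
      by (subst S1[OF ij(4)]) (simp add: g_def)
    finally show ?thesis .
  qed
  have 3: "(M11 m n t * M21 m n) $$ (a,b) = g 0 / 2 + (\<Sum>s\<in>{1..i}. g (int s))"
  proof -
    have "(M11 m n t * M21 m n) $$ (a,b) = (\<Sum>l<m. if l = j' then M11 m n t $$ (a,l) else 0)"
      using a b apply (subst idx_mult) apply (simp_all add: dims idx_cadj) by (auto simp: dims M21_def j'_def intro!: sum.cong simp: dl1 dl2 dl3 dl4)
    also have "\<dots> = M11 m n t $$ (a,j')" using ij by simp
    also have "\<dots> = g 0 / 2 + (\<Sum>s\<in>{1..i}. g (int s))"
      using a ij by (simp add: M11_def g_def i_def j_def)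
    finally show ?thesis .
  qed
  have 4: "(M31 m n * M41 m n t) $$ (a,b) = g 0 / 2 + (\<Sum>s\<in>{1..i'}. g (- int s))"
  proof -
    have "(M31 m n * M41 m n t) $$ (a,b) = (\<Sum>l<m. if l = j then M41 m n t $$ (l,b) else 0)"
      using a b apply (subst idx_mult) apply (simp_all add: dims idx_cadj) by (auto simp: dims M31_def M21_def idx_cadj j_def intro!: sum.cong simp: dl3)
    also have "\<dots> = M41 m n t $$ (j,b)" using ij by simp
    also have "\<dots> = g 0 / 2 + (\<Sum>s\<in>{1..i'}. g (- int s))"
      using b ij by (simp add: M41_def g_def i'_def j'_def)
    finally show ?thesis .
  qed
  show ?thesis unfolding 1 2 3 4 by (rule KEY[OF ij(1,3)])
qed

lemma F2:
  assumes a: "a < m*n" and b: "b < m*n"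
  shows "(A2 m n * TBT m n t) $$ (a,b) - (TBT m n t * cadj (A2 m n)) $$ (a,b)
    = \<i> * ((M12 m n t * M22 m n) $$ (a,b) + (M32 m n * M42 m n t) $$ (a,b))"
proof -
  define i where "i = a div m"
  define j where "j = a mod m"
  define i' where "i' = b div m"
  define j' where "j' = b mod m"
  have ij: "i < n" "j < m" "i' < n" "j' < m" using dmod a b unfolding i_def j_def i'_def j'_def by auto
  have m: "m > 0" using ij by auto
  define g where "g r = t (int i - int i') r" for r
  have 1: "(A2 m n * TBT m n t) $$ (a,b) = (\<Sum>k<m. aval (int j - int k) * g (int k - int j'))"
  proof -
    have "(A2 m n * TBT m n t) $$ (a,b) = (\<Sum>c<m*n. if c div m = i then (\<lambda>k l. aval (int j - int l) * t (int k - int i') (int l - int j')) (c div m) (c mod m) else 0)"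
      using a b apply (subst idx_mult) apply (simp_all add: dims) by (auto simp: dims A2_def TBT_def i_def j_def i'_def j'_def intro!: sum.cong)
    also have "\<dots> = (\<Sum>k<m. aval (int j - int k) * g (int k - int j'))"
      by (subst S2[OF ij(1) m]) (simp add: g_def)
    finally show ?thesis .
  qed
  have 2: "(TBT m n t * cadj (A2 m n)) $$ (a,b) = (\<Sum>k<m. g (int j - int k) * cnj (aval (int j' - int k)))"
  proof -
    have "(TBT m n t * cadj (A2 m n)) $$ (a,b) = (\<Sum>c<m*n. if c div m = i' then (\<lambda>k l. t (int i - int k) (int j - int l) * cnj (aval (int j' - int l))) (c div m) (c mod m) else 0)"
      using a b apply (subst idx_mult) apply (simp_all add: dims idx_cadj) by (auto simp: dims idx_cadj A2_def TBT_def i_def j_def i'_def j'_def intro!: sum.cong)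
    also have "\<dots> = (\<Sum>k<m. g (int j - int k) * cnj (aval (int j' - int k)))"
      by (subst S2[OF ij(3) m]) (simp add: g_def)
    finally show ?thesis .
  qed
  have 3: "(M12 m n t * M22 m n) $$ (a,b) = g 0 / 2 + (\<Sum>s\<in>{1..j}. g (int s))"
  proof -
    have "(M12 m n t * M22 m n) $$ (a,b) = (\<Sum>l<n. if l = i' then M12 m n t $$ (a,l) else 0)"
      using a b apply (subst idx_mult) apply (simp_all add: dims idx_cadj) by (auto simp: dims M22_def i'_def intro!: sum.cong simp: dl1 dl2 dl3 dl4)
    also have "\<dots> = M12 m n t $$ (a,i')" using ij by simp
    also have "\<dots> = g 0 / 2 + (\<Sum>s\<in>{1..j}. g (int s))"
      using a ij by (simp add: M12_def g_def i_def j_def)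
    finally show ?thesis .
  qed
  have 4: "(M32 m n * M42 m n t) $$ (a,b) = g 0 / 2 + (\<Sum>s\<in>{1..j'}. g (- int s))"
  proof -
    have "(M32 m n * M42 m n t) $$ (a,b) = (\<Sum>l<n. if l = i then M42 m n t $$ (l,b) else 0)"
      using a b apply (subst idx_mult) apply (simp_all add: dims idx_cadj) by (auto simp: dims M32_def M22_def idx_cadj i_def intro!: sum.cong simp: dl4)
    also have "\<dots> = M42 m n t $$ (i,b)" using ij by simp
    also have "\<dots> = g 0 / 2 + (\<Sum>s\<in>{1..j'}. g (- int s))"
      using b ij by (simp add: M42_def g_def i'_def j'_def)
    finally show ?thesis .
  qed
  show ?thesis unfolding 1 2 3 4 by (rule KEY[OF ij(2,4)])
qed

lemma dl5: "(j::nat) < n \<Longrightarrow> (\<Sum>k<n. cnj (if k = j then 1 else 0)) = (1::complex)"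
  using dl3[of j n "\<lambda>_. 1"] by simp
lemma dl6: "(j::nat) < n \<Longrightarrow> (\<Sum>k<n. cnj (if j = k then 1 else 0)) = (1::complex)"
  using dl4[of j n "\<lambda>_. 1"] by simp

lemma F3a:
  assumes a: "a < m*n" and b: "b < m*n"
  shows "(A1 m n * A2 m n) $$ (a,b) = aval (int (a div m) - int (b div m)) * aval (int (a mod m) - int (b mod m))"
proof -
  have ij: "a div m < n" "a mod m < m" "b div m < n" "b mod m < m" using dmod a b by auto
  have "(A1 m n * A2 m n) $$ (a,b) = (\<Sum>c<m*n. if c mod m = a mod m then (\<lambda>k l. if k = b div m then aval (int (a div m) - int k) * aval (int l - int (b mod m)) else 0) (c div m) (c mod m) else 0)"
    using a b apply (subst idx_mult) apply (simp_all add: dims) by (auto simp: dims A1_def A2_def intro!: sum.cong)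
  also have "\<dots> = aval (int (a div m) - int (b div m)) * aval (int (a mod m) - int (b mod m))"
    by (subst S1[OF ij(2)]) (simp add: ij)
  finally show ?thesis .
qed

lemma F3b:
  assumes a: "a < m*n" and b: "b < m*n"
  shows "(A2 m n * A1 m n) $$ (a,b) = aval (int (a div m) - int (b div m)) * aval (int (a mod m) - int (b mod m))"
proof -
  have ij: "a div m < n" "a mod m < m" "b div m < n" "b mod m < m" using dmod a b by auto
  have m: "m > 0" using ij by auto
  have "(A2 m n * A1 m n) $$ (a,b) = (\<Sum>c<m*n. if c div m = a div m then (\<lambda>k l. if l = b mod m then aval (int (a mod m) - int l) * aval (int k - int (b div m)) else 0) (c div m) (c mod m) else 0)"
    using a b apply (subst idx_mult) apply (simp_all add: dims) by (auto simp: dims A1_def A2_def intro!: sum.cong)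
  also have "\<dots> = aval (int (a div m) - int (b div m)) * aval (int (a mod m) - int (b mod m))"
    by (subst S2[OF ij(1) m]) (simp add: ij)
  finally show ?thesis .
qed

lemma F3: "A1 m n * A2 m n = A2 m n * A1 m n"
  by (rule eq_matI) (simp_all add: dims F3a F3b del: index_mult_mat(1))

lemma F3c: "cadj (A1 m n) * cadj (A2 m n) = cadj (A2 m n) * cadj (A1 m n)"
  by (metis F3 cadj_mult dims(3,4,5,6))

lemma F4a: "A2 m n * M31 m n = M31 m n * calA m"
proof (rule eq_matI)
  fix a l assume a: "a < dim_row (M31 m n * calA m)" and l: "l < dim_col (M31 m n * calA m)"
  hence a: "a < m*n" and l: "l < m" by (simp_all add: dims)
  have ij: "a div m < n" "a mod m < m" using dmod a by auto
  have m: "m > 0" using ij by auto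
  have "(A2 m n * M31 m n) $$ (a,l) = (\<Sum>c<m*n. if c div m = a div m then (\<lambda>k l'. if l' = l then aval (int (a mod m) - int l') else 0) (c div m) (c mod m) else 0)"
    using a l apply (subst idx_mult) apply (simp_all add: dims) by (auto simp: dims A2_def M31_def M21_def idx_cadj intro!: sum.cong)
  also have "\<dots> = aval (int (a mod m) - int l)"
    by (subst S2[OF ij(1) m]) (simp add: l)
  also have "\<dots> = (M31 m n * calA m) $$ (a,l)"
    using a l ij apply (subst idx_mult) apply (simp_all add: dims) by (auto simp: dims M31_def M21_def calA_def idx_cadj dl3)
  finally show "(A2 m n * M31 m n) $$ (a,l) = (M31 m n * calA m) $$ (a,l)" .
qed (simp_all add: dims)

lemma F4b: "M31 m n * ones m = ones (m*n)"
proof (rule eq_matI)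
  fix a l assume a: "a < dim_row (ones (m*n))" and l: "l < dim_col (ones (m*n))"
  hence a: "a < m*n" and l: "l = 0" by (simp_all add: dims)
  have ij: "a div m < n" "a mod m < m" using dmod a by auto
  show "(M31 m n * ones m) $$ (a,l) = ones (m*n) $$ (a,l)"
    using a l ij apply (subst idx_mult) apply (simp_all add: dims) by (auto simp: dims M31_def M21_def ones_def idx_cadj dl3 dl5)
qed (simp_all add: dims)

lemma F5a: "A1 m n * M32 m n = M32 m n * calA n"
proof (rule eq_matI)
  fix a k assume a: "a < dim_row (M32 m n * calA n)" and k: "k < dim_col (M32 m n * calA n)"
  hence a: "a < m*n" and k: "k < n" by (simp_all add: dims)
  have ij: "a div m < n" "a mod m < m" using dmod a by auto
  have "(A1 m n * M32 m n) $$ (a,k) = (\<Sum>c<m*n. if c mod m = a mod m then (\<lambda>k' l'. if k' = k then aval (int (a div m) - int k') else 0) (c div m) (c mod m) else 0)"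
    using a k apply (subst idx_mult) apply (simp_all add: dims) by (auto simp: dims A1_def M32_def M22_def idx_cadj intro!: sum.cong)
  also have "\<dots> = aval (int (a div m) - int k)"
    by (subst S1[OF ij(2)]) (simp add: k)
  also have "\<dots> = (M32 m n * calA n) $$ (a,k)"
    using a k ij apply (subst idx_mult) apply (simp_all add: dims) by (auto simp: dims M32_def M22_def calA_def idx_cadj dl4)
  finally show "(A1 m n * M32 m n) $$ (a,k) = (M32 m n * calA n) $$ (a,k)" .
qed (simp_all add: dims)

lemma F5b: "M32 m n * ones n = ones (m*n)"
proof (rule eq_matI)
  fix a l assume a: "a < dim_row (ones (m*n))" and l: "l < dim_col (ones (m*n))"
  hence a: "a < m*n" and l: "l = 0" by (simp_all add: dims)
  have ij: "a div m < n" "a mod m < m" using dmod a by auto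
  show "(M32 m n * ones n) $$ (a,l) = ones (m*n) $$ (a,l)"
    using a l ij apply (subst idx_mult) apply (simp_all add: dims) by (auto simp: dims M32_def M22_def ones_def idx_cadj dl4 dl6)
qed (simp_all add: dims)

lemma F4c: "M21 m n * cadj (A2 m n) = cadj (calA m) * M21 m n"
proof -
  have "cadj (A2 m n * M31 m n) = cadj (M31 m n * calA m)" by (simp add: F4a)
  thus ?thesis by (simp add: cadj_mult dims M31_def cadj_cadj idx_cadj)
qed
lemma F4d: "cadj (ones m) * M21 m n = cadj (ones (m*n))"
proof -
  have "cadj (M31 m n * ones m) = cadj (ones (m*n))" by (simp add: F4b)
  thus ?thesis by (simp add: cadj_mult dims M31_def cadj_cadj idx_cadj)
qed
lemma F5c: "M22 m n * cadj (A1 m n) = cadj (calA n) * M22 m n"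
proof -
  have "cadj (A1 m n * M32 m n) = cadj (M32 m n * calA n)" by (simp add: F5a)
  thus ?thesis by (simp add: cadj_mult dims M32_def cadj_cadj idx_cadj)
qed
lemma F5d: "cadj (ones n) * M22 m n = cadj (ones (m*n))"
proof -
  have "cadj (M32 m n * ones n) = cadj (ones (m*n))" by (simp add: F5b)
  thus ?thesis by (simp add: cadj_mult dims M32_def cadj_cadj idx_cadj)
qed

lemma minv_props:
  assumes "invertible_mat A" "A \<in> carrier_mat k k"
  shows "minv A \<in> carrier_mat k k" "A * minv A = 1\<^sub>m k" "minv A * A = 1\<^sub>m k"
proof -
  from assms(1) obtain B where AB: "A * B = 1\<^sub>m (dim_row A)" and BA: "B * A = 1\<^sub>m (dim_row B)"
    unfolding invertible_mat_def inverts_mat_def by blast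
  have "dim_col B = k" using arg_cong[OF AB, of dim_col] assms(2) by auto
  moreover have "dim_row B = k" using arg_cong[OF BA, of dim_col] assms(2) by auto
  ultimately have B: "B \<in> carrier_mat k k" by auto
  have "\<exists>B. B \<in> carrier_mat (dim_row A) (dim_row A) \<and> A * B = 1\<^sub>m (dim_row A) \<and> B * A = 1\<^sub>m (dim_row A)"
    using B AB BA assms(2) by auto
  from someI_ex[OF this] assms(2) show "minv A \<in> carrier_mat k k" "A * minv A = 1\<^sub>m k" "minv A * A = 1\<^sub>m k"
    unfolding minv_def by auto
qed

lemma inv_det:
  fixes A :: "complex mat"
  assumes A: "A \<in> carrier_mat k k"
  shows "invertible_mat A \<longleftrightarrow> det A \<noteq> 0"
proof
  assume "invertible_mat A"
  from minv_props[OF this A] have "det (A * minv A) = 1" by simp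
  with det_mult[OF A, of "minv A"] minv_props[OF \<open>invertible_mat A\<close> A] show "det A \<noteq> 0" by auto
next
  assume "det A \<noteq> 0"
  from det_non_zero_imp_unit[OF A this, of "()"]
  obtain B where B: "B \<in> carrier_mat k k" "B * A = 1\<^sub>m k" "A * B = 1\<^sub>m k"
    unfolding Units_def ring_mat_def by auto
  then show "invertible_mat A" using A unfolding invertible_mat_def inverts_mat_def square_mat.simps
    by (intro conjI exI[of _ B]) auto
qed

lemma low_det:
  fixes A :: "complex mat"
  assumes A: "A \<in> carrier_mat k k" and low: "\<And>i j. i < j \<Longrightarrow> j < k \<Longrightarrow> A $$ (i,j) = 0"
   and dg: "\<And>i. i < k \<Longrightarrow> A $$ (i,i) = c"
  shows "det A = c ^ k"
proof -
  have "diag_mat A = map (\<lambda>_. c) [0..<k]" using A dg unfolding diag_mat_def by auto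
  then show ?thesis using det_lower_triangular[OF low A] by (simp add: map_replicate_const)
qed

lemma up_det:
  fixes A :: "complex mat"
  assumes A: "A \<in> carrier_mat k k" and up: "\<And>i j. j < i \<Longrightarrow> i < k \<Longrightarrow> A $$ (i,j) = 0"
   and dg: "\<And>i. i < k \<Longrightarrow> A $$ (i,i) = c"
  shows "det A = c ^ k"
proof -
  have "diag_mat A = map (\<lambda>_. c) [0..<k]" using A dg unfolding diag_mat_def by auto
  moreover have "upper_triangular A" using A up by (intro upper_triangularI) auto
  ultimately show ?thesis using det_upper_triangular[OF _ A] by (simp add: map_replicate_const)
qed

lemma aval_neg: "r < 0 \<Longrightarrow> aval r = 0" by (simp add: aval_def)

lemma det_A2: "det (A2 m n - lm \<cdot>\<^sub>m 1\<^sub>m (m*n)) = (\<i>/2 - lm) ^ (m*n)"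
proof (rule low_det)
  fix a b assume "a < b" "b < m*n"
  moreover have "a div m = b div m \<Longrightarrow> a mod m < b mod m" using \<open>a < b\<close>
    by (metis div_mod_decomp add_less_cancel_left)
  ultimately show "(A2 m n - lm \<cdot>\<^sub>m 1\<^sub>m (m*n)) $$ (a,b) = 0" by (auto simp: A2_def aval_neg)
qed (auto simp: A2_def aval_def dims)

lemma det_A1: "det (A1 m n - lm \<cdot>\<^sub>m 1\<^sub>m (m*n)) = (\<i>/2 - lm) ^ (m*n)"
proof (rule low_det)
  fix a b assume "a < b" "b < m*n"
  moreover have "a mod m = b mod m \<Longrightarrow> a div m < b div m" using \<open>a < b\<close>
    by (metis div_mod_decomp add_less_cancel_right mult_less_cancel2 less_or_eq_imp_le nat_less_le mult.commute)
  ultimately show "(A1 m n - lm \<cdot>\<^sub>m 1\<^sub>m (m*n)) $$ (a,b) = 0" by (auto simp: A1_def aval_neg)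
qed (auto simp: A1_def aval_def dims)

lemma det_cA: "det (calA k - lm \<cdot>\<^sub>m 1\<^sub>m k) = (\<i>/2 - lm) ^ k"
  by (rule low_det) (auto simp: calA_def aval_def dims)

lemma det_A2c: "det (cadj (A2 m n) - mu \<cdot>\<^sub>m 1\<^sub>m (m*n)) = (- \<i>/2 - mu) ^ (m*n)"
proof (rule up_det)
  fix a b assume "b < a" "a < m*n"
  moreover have "a div m = b div m \<Longrightarrow> b mod m < a mod m" using \<open>b < a\<close>
    by (metis div_mod_decomp add_less_cancel_left)
  ultimately show "(cadj (A2 m n) - mu \<cdot>\<^sub>m 1\<^sub>m (m*n)) $$ (a,b) = 0" by (auto simp: A2_def aval_neg idx_cadj dims)
qed (auto simp: A2_def aval_def dims idx_cadj)

lemma det_A1c: "det (cadj (A1 m n) - mu \<cdot>\<^sub>m 1\<^sub>m (m*n)) = (- \<i>/2 - mu) ^ (m*n)"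
proof (rule up_det)
  fix a b assume "b < a" "a < m*n"
  moreover have "a mod m = b mod m \<Longrightarrow> b div m < a div m" using \<open>b < a\<close>
    by (metis div_mod_decomp add_less_cancel_right mult_less_cancel2 less_or_eq_imp_le nat_less_le mult.commute)
  ultimately show "(cadj (A1 m n) - mu \<cdot>\<^sub>m 1\<^sub>m (m*n)) $$ (a,b) = 0" by (auto simp: A1_def aval_neg idx_cadj dims)
qed (auto simp: A1_def aval_def dims idx_cadj)

lemma det_cAc: "det (cadj (calA k) - mu \<cdot>\<^sub>m 1\<^sub>m k) = (- \<i>/2 - mu) ^ k"
  by (rule up_det) (auto simp: calA_def aval_def dims idx_cadj)

theorem proposition2p1:
  fixes m n p :: nat and t :: "int \<Rightarrow> int \<Rightarrow> complex" and lam mu :: "nat \<Rightarrow> complex"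
  assumes "m \<ge> 1" and "n \<ge> 1"
    and "invertible_mat (TBT m n t)"
    and "invertible_mat (A1 m n - lam 1 \<cdot>\<^sub>m 1\<^sub>m (m*n))"
    and "invertible_mat (A2 m n - lam 2 \<cdot>\<^sub>m 1\<^sub>m (m*n))"
    and "invertible_mat (cadj (A1 m n) - mu 1 \<cdot>\<^sub>m 1\<^sub>m (m*n))"
    and "invertible_mat (cadj (A2 m n) - mu 2 \<cdot>\<^sub>m 1\<^sub>m (m*n))"
    and "p \<in> {1, 2}"
    and "lam p \<noteq> mu p"
  shows "omega m n t lam mu
           = \<i> * inverse (lam p - mu p) * (uvec m n t mu * Pmat m n p * uhat m n t lam) $$ (0,0)"
proof -
  define N where "N = m*n"
  have Npos: "N > 0" using assms(1,2) by (simp add: N_def)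
  define T where "T = TBT m n t"
  define X where "X = minv T"
  define K1 where "K1 = A1 m n - lam 1 \<cdot>\<^sub>m 1\<^sub>m N"
  define K2 where "K2 = A2 m n - lam 2 \<cdot>\<^sub>m 1\<^sub>m N"
  define H1 where "H1 = cadj (A1 m n) - mu 1 \<cdot>\<^sub>m 1\<^sub>m N"
  define H2 where "H2 = cadj (A2 m n) - mu 2 \<cdot>\<^sub>m 1\<^sub>m N"
  define L1 where "L1 = minv K1"
  define L2 where "L2 = minv K2"
  define R1 where "R1 = minv H1"
  define R2 where "R2 = minv H2"
  define c1 where "c1 = calA n - lam 1 \<cdot>\<^sub>m 1\<^sub>m n"
  define c2 where "c2 = calA m - lam 2 \<cdot>\<^sub>m 1\<^sub>m m"
  define h1 where "h1 = cadj (calA n) - mu 1 \<cdot>\<^sub>m 1\<^sub>m n"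
  define h2 where "h2 = cadj (calA m) - mu 2 \<cdot>\<^sub>m 1\<^sub>m m"
  define l1 where "l1 = minv c1 * ones n"
  define l2 where "l2 = minv c2 * ones m"
  define r1 where "r1 = cadj (ones n) * minv h1"
  define r2 where "r2 = cadj (ones m) * minv h2"
  define P1 where "P1 = M11 m n t @\<^sub>c M31 m n"
  define Q1 where "Q1 = M21 m n @\<^sub>r M41 m n t"
  define P2 where "P2 = M12 m n t @\<^sub>c M32 m n"
  define Q2 where "Q2 = M22 m n @\<^sub>r M42 m n t"
  define oN where "oN = ones N"
  define oNc where "oNc = cadj (ones N)"
  define Wv where "Wv = oNc * R1 * R2"
  define Zv where "Zv = L2 * (L1 * oN)"

  have cT: "T \<in> carrier_mat N N" by (simp add: T_def N_def carrier_matI dims)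
  have cK: "K1 \<in> carrier_mat N N" "K2 \<in> carrier_mat N N" "H1 \<in> carrier_mat N N" "H2 \<in> carrier_mat N N"
    by (auto simp: K1_def K2_def H1_def H2_def N_def carrier_matI dims idx_cadj)
  have cc: "c1 \<in> carrier_mat n n" "c2 \<in> carrier_mat m m" "h1 \<in> carrier_mat n n" "h2 \<in> carrier_mat m m"
    by (auto simp: c1_def c2_def h1_def h2_def carrier_matI dims idx_cadj)
  have iT: "invertible_mat T" using assms(3) by (simp add: T_def)
  have iK: "invertible_mat K1" "invertible_mat K2" "invertible_mat H1" "invertible_mat H2"
    using assms(4-7) by (simp_all add: K1_def K2_def H1_def H2_def N_def)
  have nz: "\<i>/2 - lam 1 \<noteq> 0" "\<i>/2 - lam 2 \<noteq> 0" "- \<i>/2 - mu 1 \<noteq> 0" "- \<i>/2 - mu 2 \<noteq> 0"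
    using iK inv_det[OF cK(1)] inv_det[OF cK(2)] inv_det[OF cK(3)] inv_det[OF cK(4)] Npos
    by (auto simp: K1_def K2_def H1_def H2_def N_def det_A1 det_A2 det_A1c det_A2c)
  have ic: "invertible_mat c1" "invertible_mat c2" "invertible_mat h1" "invertible_mat h2"
    using nz inv_det[OF cc(1)] inv_det[OF cc(2)] inv_det[OF cc(3)] inv_det[OF cc(4)]
    by (auto simp: c1_def c2_def h1_def h2_def det_cA det_cAc)
  note mT = minv_props[OF iT cT, folded X_def]
  note mK1 = minv_props[OF iK(1) cK(1), folded L1_def]
  note mK2 = minv_props[OF iK(2) cK(2), folded L2_def]
  note mH1 = minv_props[OF iK(3) cK(3), folded R1_def]
  note mH2 = minv_props[OF iK(4) cK(4), folded R2_def]
  note mc1 = minv_props[OF ic(1) cc(1)]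
  note mc2 = minv_props[OF ic(2) cc(2)]
  note mh1 = minv_props[OF ic(3) cc(3)]
  note mh2 = minv_props[OF ic(4) cc(4)]

  have cM: "M11 m n t \<in> carrier_mat N m" "M31 m n \<in> carrier_mat N m" "M21 m n \<in> carrier_mat m N" "M41 m n t \<in> carrier_mat m N"
     "M12 m n t \<in> carrier_mat N n" "M32 m n \<in> carrier_mat N n" "M22 m n \<in> carrier_mat n N" "M42 m n t \<in> carrier_mat n N"
    by (auto simp: N_def carrier_matI dims)
  have cP: "P1 \<in> carrier_mat N (2*m)" "Q1 \<in> carrier_mat (2*m) N" "P2 \<in> carrier_mat N (2*n)" "Q2 \<in> carrier_mat (2*n) N"
    by (auto simp: P1_def Q1_def P2_def Q2_def N_def carrier_matI dims idx_ac idx_ar)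
  have co: "ones k \<in> carrier_mat k 1" "cadj (ones k) \<in> carrier_mat 1 k" for k
    by (simp_all add: ones_def cadj_def)
  have cv: "oN \<in> carrier_mat N 1" "oNc \<in> carrier_mat 1 N" "l1 \<in> carrier_mat n 1" "l2 \<in> carrier_mat m 1"
    "r1 \<in> carrier_mat 1 n" "r2 \<in> carrier_mat 1 m"
    unfolding oN_def oNc_def l1_def l2_def r1_def r2_def
    by (rule co, rule co, rule mult_carrier_mat[OF mc1(1) co(1)], rule mult_carrier_mat[OF mc2(1) co(1)],
        rule mult_carrier_mat[OF co(2) mh1(1)], rule mult_carrier_mat[OF co(2) mh2(1)])

  have D1: "A1 m n * T - T * cadj (A1 m n) = \<i> \<cdot>\<^sub>m (P1 * Q1)"
  proof -
    have "P1 * Q1 = M11 m n t * M21 m n + M31 m n * M41 m n t"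
      unfolding P1_def Q1_def by (rule ac_ar) (simp_all add: dims)
    then show ?thesis
      by (auto simp: T_def dims idx_cadj F1 intro!: eq_matI simp del: index_mult_mat(1))
  qed
  have D2: "A2 m n * T - T * cadj (A2 m n) = \<i> \<cdot>\<^sub>m (P2 * Q2)"
  proof -
    have "P2 * Q2 = M12 m n t * M22 m n + M32 m n * M42 m n t"
      unfolding P2_def Q2_def by (rule ac_ar) (simp_all add: dims)
    then show ?thesis
      by (auto simp: T_def dims idx_cadj F2 intro!: eq_matI simp del: index_mult_mat(1))
  qed
  have cA: "A1 m n \<in> carrier_mat N N" "A2 m n \<in> carrier_mat N N" "cadj (A1 m n) \<in> carrier_mat N N" "cadj (A2 m n) \<in> carrier_mat N N"
    by (auto simp: N_def carrier_matI dims idx_cadj)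
  have core1: "R1*X - X*L1 = \<i> \<cdot>\<^sub>m (R1*(X*(P1*(Q1*(X*L1))))) + (mu 1 - lam 1) \<cdot>\<^sub>m (R1*(X*L1))"
    by (rule core[OF cT mT(1) cA(1) cA(3) mH1(1) mK1(1) cP(1) cP(2) mT(3) mT(2)])
      (use mH1(3) mK1(2) D1 in \<open>simp_all add: H1_def K1_def\<close>)
  have core2: "R2*X - X*L2 = \<i> \<cdot>\<^sub>m (R2*(X*(P2*(Q2*(X*L2))))) + (mu 2 - lam 2) \<cdot>\<^sub>m (R2*(X*L2))"
    by (rule core[OF cT mT(1) cA(2) cA(4) mH2(1) mK2(1) cP(3) cP(4) mT(3) mT(2)])
      (use mH2(3) mK2(2) D2 in \<open>simp_all add: H2_def K2_def\<close>)

  have Pl1: "M31 m n * l2 = L2 * oN"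
    unfolding l2_def oN_def
    by (rule col_trick[OF cA(2) cM(2) _ mc2(1) mK2(1)]) (use mc2(2) mK2(3) in \<open>auto simp: F4a F4b N_def c2_def K2_def carrier_matI dims\<close>)
  have Pl2: "M32 m n * l1 = L1 * oN"
    unfolding l1_def oN_def
    by (rule col_trick[OF cA(1) cM(6) _ mc1(1) mK1(1)]) (use mc1(2) mK1(3) in \<open>auto simp: F5a F5b N_def c1_def K1_def carrier_matI dims\<close>)
  have rQ1: "r2 * M21 m n = oNc * R2"
    unfolding r2_def oNc_def
    by (rule row_trick[OF cA(4) cM(3) _ mh2(1) mH2(1)]) (use mh2(3) mH2(2) in \<open>auto simp: F4c F4d N_def h2_def H2_def carrier_matI dims idx_cadj\<close>)
  have rQ2: "r1 * M22 m n = oNc * R1"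
    unfolding r1_def oNc_def
    by (rule row_trick[OF cA(3) cM(7) _ mh1(1) mH1(1)]) (use mh1(3) mH1(2) in \<open>auto simp: F5c F5d N_def h1_def H1_def carrier_matI dims idx_cadj\<close>)

  have KK: "K1 * K2 = K2 * K1"
    unfolding K1_def K2_def N_def using F3[of m n]
    apply (simp add: msimps dims)
    apply (rule eq_matI)
      apply (simp_all add: dims del: index_mult_mat(1))
    apply (simp add: algebra_simps)
    done
  have HH: "H1 * H2 = H2 * H1"
    unfolding H1_def H2_def N_def using F3c[of m n]
    apply (simp add: msimps dims idx_cadj)
    apply (rule eq_matI)
      apply (simp_all add: dims idx_cadj del: index_mult_mat(1))
    apply (simp add: algebra_simps)
    done
  have LL: "L1 * L2 = L2 * L1"
    by (rule commute_inv[OF cK(1,2) mK1(1) mK2(1) mK1(2,3) mK2(2,3) KK])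
  have RR: "R1 * R2 = R2 * R1"
    by (rule commute_inv[OF cK(3,4) mH1(1) mH2(1) mH1(2,3) mH2(2,3) HH])

  have Ud: "uvec m n t mu = (Wv*(X*P1) - \<i> \<cdot>\<^sub>m (r2 @\<^sub>c 0\<^sub>m 1 m)) @\<^sub>c (Wv*(X*P2) - \<i> \<cdot>\<^sub>m (r1 @\<^sub>c 0\<^sub>m 1 n))"
  proof -
    have "uvec m n t mu = Wv * ((X*P1) @\<^sub>c (X*P2)) - \<i> \<cdot>\<^sub>m (r2 @\<^sub>c (0\<^sub>m 1 m @\<^sub>c (r1 @\<^sub>c 0\<^sub>m 1 n)))"
      unfolding uvec_def Gam_def Let_def Wv_def oNc_def R1_def R2_def H1_def H2_def N_def X_def T_def
         P1_def P2_def r1_def r2_def h1_def h2_def by (rule refl)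
    also have "r2 @\<^sub>c (0\<^sub>m 1 m @\<^sub>c (r1 @\<^sub>c 0\<^sub>m 1 n)) = (r2 @\<^sub>c 0\<^sub>m 1 m) @\<^sub>c (r1 @\<^sub>c 0\<^sub>m 1 n)"
      using cv by (simp add: ac_assoc idx_ac)
    also have "Wv * ((X*P1) @\<^sub>c (X*P2)) - \<i> \<cdot>\<^sub>m ((r2 @\<^sub>c 0\<^sub>m 1 m) @\<^sub>c (r1 @\<^sub>c 0\<^sub>m 1 n))
       = (Wv*(X*P1) - \<i> \<cdot>\<^sub>m (r2 @\<^sub>c 0\<^sub>m 1 m)) @\<^sub>c (Wv*(X*P2) - \<i> \<cdot>\<^sub>m (r1 @\<^sub>c 0\<^sub>m 1 n))"
      using cv cP mT(1) mH1(1) mH2(1)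
      by (simp add: mL_ac ac_smult ac_minus idx_ac Wv_def)
    finally show ?thesis .
  qed
  have Vd: "uhat m n t lam = (Q1*X*Zv + \<i> \<cdot>\<^sub>m (0\<^sub>m m 1 @\<^sub>r l2)) @\<^sub>r (Q2*X*Zv + \<i> \<cdot>\<^sub>m (0\<^sub>m n 1 @\<^sub>r l1))"
  proof -
    have "uhat m n t lam = ((Q1*X) @\<^sub>r (Q2*X)) * L2 * L1 * oN + \<i> \<cdot>\<^sub>m (0\<^sub>m m 1 @\<^sub>r (l2 @\<^sub>r (0\<^sub>m n 1 @\<^sub>r l1)))"
      unfolding uhat_def Gamhat_def Let_def oN_def L1_def L2_def K1_def K2_def N_def X_def T_def
         Q1_def Q2_def l1_def l2_def c1_def c2_def by (rule refl)
    also have "((Q1*X) @\<^sub>r (Q2*X)) * L2 * L1 * oN = ((Q1*X) @\<^sub>r (Q2*X)) * Zv"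
      using cv cP mT(1) mK1(1) mK2(1) by (simp add: mA idx_ar Zv_def)
    also have "0\<^sub>m m 1 @\<^sub>r (l2 @\<^sub>r (0\<^sub>m n 1 @\<^sub>r l1)) = (0\<^sub>m m 1 @\<^sub>r l2) @\<^sub>r (0\<^sub>m n 1 @\<^sub>r l1)"
      using cv by (simp add: ar_assoc idx_ar)
    also have "((Q1*X) @\<^sub>r (Q2*X)) * Zv + \<i> \<cdot>\<^sub>m ((0\<^sub>m m 1 @\<^sub>r l2) @\<^sub>r (0\<^sub>m n 1 @\<^sub>r l1))
       = (Q1*X*Zv + \<i> \<cdot>\<^sub>m (0\<^sub>m m 1 @\<^sub>r l2)) @\<^sub>r (Q2*X*Zv + \<i> \<cdot>\<^sub>m (0\<^sub>m n 1 @\<^sub>r l1))"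
      using cv cP mT(1) mK1(1) mK2(1)
      by (simp add: mR_ar ar_smult ar_plus idx_ar Zv_def)
    finally show ?thesis .
  qed
  have cU: "Wv*(X*P1) - \<i> \<cdot>\<^sub>m (r2 @\<^sub>c 0\<^sub>m 1 m) \<in> carrier_mat 1 (2*m)"
     "Wv*(X*P2) - \<i> \<cdot>\<^sub>m (r1 @\<^sub>c 0\<^sub>m 1 n) \<in> carrier_mat 1 (2*n)"
     "Q1*X*Zv + \<i> \<cdot>\<^sub>m (0\<^sub>m m 1 @\<^sub>r l2) \<in> carrier_mat (2*m) 1"
     "Q2*X*Zv + \<i> \<cdot>\<^sub>m (0\<^sub>m n 1 @\<^sub>r l1) \<in> carrier_mat (2*n) 1"
  proof -
    have dv: "dim_row r2 = 1" "dim_col r2 = m" "dim_row r1 = 1" "dim_col r1 = n"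
      "dim_row l2 = m" "dim_col l2 = 1" "dim_row l1 = n" "dim_col l1 = 1"
      using cv by auto
    show "Wv*(X*P1) - \<i> \<cdot>\<^sub>m (r2 @\<^sub>c 0\<^sub>m 1 m) \<in> carrier_mat 1 (2*m)"
      by (rule carrier_matI) (simp_all add: dv idx_ac)
    show "Wv*(X*P2) - \<i> \<cdot>\<^sub>m (r1 @\<^sub>c 0\<^sub>m 1 n) \<in> carrier_mat 1 (2*n)"
      by (rule carrier_matI) (simp_all add: dv idx_ac)
    show "Q1*X*Zv + \<i> \<cdot>\<^sub>m (0\<^sub>m m 1 @\<^sub>r l2) \<in> carrier_mat (2*m) 1"
      by (rule carrier_matI) (simp_all add: dv idx_ar)
    show "Q2*X*Zv + \<i> \<cdot>\<^sub>m (0\<^sub>m n 1 @\<^sub>r l1) \<in> carrier_mat (2*n) 1"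
      by (rule carrier_matI) (simp_all add: dv idx_ar)
  qed
  have om: "omega m n t lam mu = (oNc*(R1*(R2*(X*(L2*(L1*oN)))))) $$ (0,0)"
  proof -
    have "omega m n t lam mu = (oNc*R1*R2*X*L2*L1*oN) $$ (0,0)"
      unfolding omega_def Let_def oNc_def oN_def R1_def R2_def L1_def L2_def X_def T_def N_def K1_def K2_def H1_def H2_def
      by (rule refl)
    also have "oNc*R1*R2*X*L2*L1*oN = oNc*(R1*(R2*(X*(L2*(L1*oN)))))"
      using cv mT(1) mK1(1) mK2(1) mH1(1) mH2(1) by (simp add: mA)
    finally show ?thesis .
  qed

  have fin: "w = \<i> * inverse (a - b) * (\<i> * (b - a) * w)" if "a \<noteq> b" for a b w :: complex
  proof -
    have h: "inverse (a - b) * (b - a) = -1" using that by (simp add: divide_simps)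
    have "\<i> * inverse (a - b) * (\<i> * (b - a) * w) = (\<i>*\<i>) * (inverse (a - b) * (b - a)) * w"
      by (simp only: ac_simps)
    also have "\<dots> = w" unfolding h by simp
    finally show ?thesis by simp
  qed
  have dx: "dim_row oNc = 1" "dim_col oN = 1" using cv by auto
  show ?thesis
  proof (cases "p = 1")
    case True
    have cx: "oNc * R2 \<in> carrier_mat 1 N" using cv mH2(1) by auto
    have cy: "L2 * oN \<in> carrier_mat N 1" using cv mK2(1) by auto
    have d: "dim_col oNc = N" "dim_row R1 = N" "dim_col R1 = N" "dim_row R2 = N" "dim_col R2 = N"
      "dim_row L1 = N" "dim_col L1 = N" "dim_row L2 = N" "dim_col L2 = N" "dim_row oN = N"
      "dim_row X = N" "dim_col X = N"
      using cv mH1(1) mH2(1) mK1(1) mK2(1) mT(1) by auto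
    have W: "Wv = oNc * R2 * R1"
    proof -
      have "Wv = oNc*(R1*R2)" unfolding Wv_def by (rule mA) (simp_all add: d)
      also have "\<dots> = oNc*(R2*R1)" by (simp only: RR)
      also have "\<dots> = oNc*R2*R1" by (rule mA[symmetric]) (simp_all add: d)
      finally show ?thesis .
    qed
    have Z: "Zv = L1 * (L2 * oN)"
    proof -
      have "Zv = (L2*L1)*oN" unfolding Zv_def by (rule mA[symmetric]) (simp_all add: d)
      also have "\<dots> = (L1*L2)*oN" by (simp only: LL)
      also have "\<dots> = L1 * (L2 * oN)" by (rule mA) (simp_all add: d)
      finally show ?thesis .
    qed
    have UV: "(Wv*(X*P1) - \<i> \<cdot>\<^sub>m (r2 @\<^sub>c 0\<^sub>m 1 m)) * (Q1*X*Zv + \<i> \<cdot>\<^sub>m (0\<^sub>m m 1 @\<^sub>r l2))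
       = (\<i>*(mu 1 - lam 1)) \<cdot>\<^sub>m ((oNc*R2)*(R1*(X*(L1*(L2*oN)))))"
      unfolding P1_def Q1_def
      by (rule G[OF cx cy mH1(1) mT(1) mK1(1) cM(1) cM(2) cM(3) cM(4) cv(6) cv(4)
          core1[unfolded P1_def Q1_def] Pl1 rQ1 W Z])
    have e: "(oNc*R2)*(R1*(X*(L1*(L2*oN)))) = oNc*(R1*(R2*(X*(L2*(L1*oN)))))"
    proof -
      have "(oNc*R2)*(R1*(X*(L1*(L2*oN)))) = oNc*((R2*R1)*(X*((L1*L2)*oN)))"
        using d by (simp add: mA)
      also have "\<dots> = oNc*((R1*R2)*(X*((L2*L1)*oN)))" by (simp only: RR LL)
      also have "\<dots> = oNc*(R1*(R2*(X*(L2*(L1*oN)))))" using d by (simp add: mA)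
      finally show ?thesis .
    qed
    have "uvec m n t mu * Pmat m n p * uhat m n t lam
       = (\<i>*(mu 1 - lam 1)) \<cdot>\<^sub>m (oNc*(R1*(R2*(X*(L2*(L1*oN))))))"
      unfolding True Ud Vd uPv1[OF cU] UV e ..
    then show ?thesis using True assms(9) om dx fin[of "lam 1" "mu 1"] by simp
  next
    case False
    then have p2: "p = 2" using assms(8) by auto
    have cx: "oNc * R1 \<in> carrier_mat 1 N" using cv mH1(1) by auto
    have cy: "L1 * oN \<in> carrier_mat N 1" using cv mK1(1) by auto
    have UV: "(Wv*(X*P2) - \<i> \<cdot>\<^sub>m (r1 @\<^sub>c 0\<^sub>m 1 n)) * (Q2*X*Zv + \<i> \<cdot>\<^sub>m (0\<^sub>m n 1 @\<^sub>r l1))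
       = (\<i>*(mu 2 - lam 2)) \<cdot>\<^sub>m ((oNc*R1)*(R2*(X*(L2*(L1*oN)))))"
      unfolding P2_def Q2_def
      by (rule G[OF cx cy mH2(1) mT(1) mK2(1) cM(5) cM(6) cM(7) cM(8) cv(5) cv(3)
          core2[unfolded P2_def Q2_def] Pl2 rQ2 Wv_def Zv_def])
    have e: "(oNc*R1)*(R2*(X*(L2*(L1*oN)))) = oNc*(R1*(R2*(X*(L2*(L1*oN)))))"
      using cv mT(1) mK1(1) mK2(1) mH1(1) mH2(1) by (simp add: mA)
    have "uvec m n t mu * Pmat m n p * uhat m n t lam
       = (\<i>*(mu 2 - lam 2)) \<cdot>\<^sub>m (oNc*(R1*(R2*(X*(L2*(L1*oN))))))"
      unfolding p2 Ud Vd uPv2[OF cU] UV e ..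
    then show ?thesis using p2 assms(9) om dx fin[of "lam 2" "mu 2"] by simp
  qed
qed

end
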